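(* There is a vector $\Delta\in\mathbb R^d$ such that $$w-w^\star=H(\phi-\phi^\star)+\nabla g(\phi^\star)^\top(\lambda-\lambda^\star)+\Delta,$$ with $\|\Delta\|_{H^{-1}}\le\frac14\|\phi-\phi^\star\|_H+L\,\|\phi-\phi^\star\|_H\,\|\lambda-\lambda^\star\|_W$, and moreover $$\|P_GH^{1/2}(\phi-\phi^\star)\|_2\le\frac L2\|\phi-\phi^\star\|_H^2.$$
   Context: Let $m\le d$ and $g=(g_1,\dots,g_m):\mathbb R^d\to\mathbb R^m$, each $g_i$ strongly convex and twice differentiable; $\Phi=\{x:g(x)\le0\}$; $\nabla g(x)\in\mathbb R^{m\times d}$ is the Jacobian. For $w^\star,w\in\mathbb R^d$ let $\phi^\star=\arg\max_{x\in\Phi}x^\top w^\star$, $\phi=\arg\max_{x\in\Phi}x^\top w$, with $g(\phi^\star)=g(\phi)=0$. $\lambda^\star,\lambda\in\mathbb R^m_{\ge0}$ are KKT multipliers: $w^\star=\nabla g(\phi^\star)^\top\lambda^\star$, $w=\nabla g(\phi)^\top\lambda$. $H=\sum_i\lambda^\star_i\nabla^2g_i(\phi^\star)$, positive definite; $\|x\|_M=\sqrt{x^\top Mx}$. $W=\nabla g(\phi^\star)H^{-1}\nabla g(\phi^\star)^\top$, invertible. $P_G=H^{-1/2}\nabla g(\phi^\star)^\top W^{-1}\nabla g(\phi^\star)H^{-1/2}$. Smoothness: (S1) $\|\{\nabla g(\phi)-\nabla g(\phi^\star)\}^\top\lambda^\star-H(\phi-\phi^\star)\|_{H^{-1}}\le\frac14\|\phi-\phi^\star\|_H$;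 (S2) there is $L>0$ with $\|W^{-1/2}\{\nabla g(x)-\nabla g(\phi^\star)\}H^{-1/2}\|_2\le L\|x-\phi^\star\|_H$ for all $x\in\mathbb R^d$. *)

theory Defs
  imports "HOL-Analysis.Analysis"
begin

text \<open>Strong convexity on the whole space: f - (mu/2)|x|^2 is convex for some mu > 0.\<close>
definition strongly_convex :: "('a::real_inner \<Rightarrow> real) \<Rightarrow> bool" where
  "strongly_convex f \<longleftrightarrow> (\<exists>\<mu>>0. convex_on UNIV (\<lambda>x. f x - \<mu> / 2 * (norm x)\<^sup>2))"

text \<open>Positive (semi)definite symmetric matrices.\<close>
definition pos_def :: "real^'n^'n \<Rightarrow> bool" where
  "pos_def A \<longleftrightarrow> transpose A = A \<and> (\<forall>x. x \<noteq> 0 \<longrightarrow> x \<bullet> (A *v x) > 0)"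

definition pos_semidef :: "real^'n^'n \<Rightarrow> bool" where
  "pos_semidef A \<longleftrightarrow> transpose A = A \<and> (\<forall>x. x \<bullet> (A *v x) \<ge> 0)"

text \<open>The (unique) symmetric positive semidefinite square root A^(1/2).\<close>
definition msqrt :: "real^'n^'n \<Rightarrow> real^'n^'n" where
  "msqrt A = (THE S. pos_semidef S \<and> S ** S = A)"

text \<open>The weighted norm |x|_M = sqrt(x^T M x).\<close>
definition mnorm :: "real^'n^'n \<Rightarrow> real^'n \<Rightarrow> real" where
  "mnorm M x = sqrt (x \<bullet> (M *v x))"

end

theory Submission
  imports Defs
begin


lemma sym_dot:
  fixes A :: "real^'n^'n"
  assumes "transpose A = A"
  shows "x \<bullet> (A *v y) = (A *v x) \<bullet> y"
proof -
  have "x \<bullet> (A *v y) = (x v* A) \<bullet> y" by (simp add: dot_lmul_matrix)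
  also have "x v* A = transpose A *v x" by (simp add: transpose_matrix_vector)
  finally show ?thesis using assms by simp
qed

definition oeig :: "real^'n^'n \<Rightarrow> (real^'n) set \<Rightarrow> bool" where
  "oeig A B \<longleftrightarrow> finite B \<and> (\<forall>b\<in>B. norm b = 1 \<and> A *v b = (b \<bullet> (A *v b)) *\<^sub>R b)
     \<and> (\<forall>b\<in>B. \<forall>c\<in>B. b \<noteq> c \<longrightarrow> b \<bullet> c = 0)"

lemma eig_step:
  fixes A :: "real^'n^'n"
  assumes sym: "transpose A = A" and oe: "oeig A B" and y0: "y \<noteq> 0"
    and yB: "\<forall>b\<in>B. b \<bullet> y = 0"
  shows "\<exists>v. norm v = 1 \<and> (\<forall>b\<in>B. b \<bullet> v = 0) \<and> A *v v = (v \<bullet> (A *v v)) *\<^sub>R v"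
proof -
  define K where "K = sphere (0::real^'n) 1 \<inter> (\<Inter>b\<in>B. {x. b \<bullet> x = 0})"
  have "compact K" unfolding K_def
    by (intro compact_Int_closed compact_sphere closed_INT ballI closed_hyperplane)
  moreover have "y /\<^sub>R norm y \<in> K" using y0 yB unfolding K_def
    by (auto simp: inner_scaleR_right)
  hence "K \<noteq> {}" by auto
  moreover have "continuous_on K (\<lambda>x. x \<bullet> (A *v x))"
    by (intro continuous_intros linear_continuous_on matrix_vector_mul_bounded_linear)
  ultimately obtain v where vK: "v \<in> K" and vmax: "\<forall>x\<in>K. x \<bullet> (A *v x) \<le> v \<bullet> (A *v v)"
    using continuous_attains_sup by blast
  define \<mu> where "\<mu> = v \<bullet> (A *v v)"
  have nv: "norm v = 1" and vB: "\<forall>b\<in>B. b \<bullet> v = 0" using vK unfolding K_def by auto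
  have vv: "v \<bullet> v = 1" using nv by (simp add: norm_eq_1)
  have hom: "z \<bullet> (A *v z) \<le> \<mu> * (z \<bullet> z)" if zB: "\<forall>b\<in>B. b \<bullet> z = 0" for z
  proof (cases "z = 0")
    case True then show ?thesis by simp
  next
    case False
    have "z /\<^sub>R norm z \<in> K" using False zB unfolding K_def by (auto simp: inner_scaleR_right)
    hence "(z /\<^sub>R norm z) \<bullet> (A *v (z /\<^sub>R norm z)) \<le> \<mu>" using vmax \<mu>_def by blast
    hence "(z \<bullet> (A *v z)) / (norm z)^2 \<le> \<mu>"
      by (simp add: matrix_vector_mult_scaleR power2_eq_square divide_inverse mult.commute mult.left_commute)
    moreover have "(norm z)^2 > 0" using False by simp
    ultimately have "z \<bullet> (A *v z) \<le> \<mu> * (norm z)^2" by (simp add: divide_le_eq)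
    then show ?thesis by (simp add: power2_norm_eq_inner)
  qed
  define r where "r = A *v v - \<mu> *\<^sub>R v"
  have rv: "r \<bullet> v = 0" unfolding r_def \<mu>_def using vv
    by (simp add: inner_diff_left inner_diff_right inner_commute)
  have rB: "\<forall>b\<in>B. b \<bullet> r = 0"
  proof
    fix b assume bB: "b \<in> B"
    have "b \<bullet> (A *v v) = (A *v b) \<bullet> v" using sym_dot[OF sym] by blast
    also have "\<dots> = 0" using oe bB vB unfolding oeig_def by (metis inner_scaleR_left mult_zero_right)
    finally show "b \<bullet> r = 0" unfolding r_def using bB vB by (simp add: inner_diff_right)
  qed
  have rAv: "r \<bullet> (A *v v) = r \<bullet> r"
  proof -
    have "A *v v = r + \<mu> *\<^sub>R v" unfolding r_def by simp
    hence "r \<bullet> (A *v v) = r \<bullet> r + \<mu> * (r \<bullet> v)" by (simp add: inner_add_right)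
    then show ?thesis using rv by simp
  qed
  have "r = 0"
  proof (rule ccontr)
    assume "r \<noteq> 0"
    define \<rho> where "\<rho> = r \<bullet> r"
    define c where "c = r \<bullet> (A *v r)"
    have \<rho>pos: "\<rho> > 0" unfolding \<rho>_def using \<open>r \<noteq> 0\<close> by simp
    define t where "t = \<rho> / (\<bar>\<mu>\<bar> * \<rho> + \<bar>c\<bar> + 1)"
    have den: "\<bar>\<mu>\<bar> * \<rho> + \<bar>c\<bar> + 1 > 0" using \<rho>pos by (simp add: add_nonneg_pos)
    have tpos: "t > 0" unfolding t_def using \<rho>pos den by simp
    have tden: "t * (\<bar>\<mu>\<bar> * \<rho> + \<bar>c\<bar> + 1) = \<rho>" unfolding t_def using den by simp
    let ?z = "v + t *\<^sub>R r"
    have zB: "\<forall>b\<in>B. b \<bullet> ?z = 0" using vB rB by (simp add: inner_add_right)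
    have vAr: "v \<bullet> (A *v r) = r \<bullet> (A *v v)"
      using sym_dot[OF sym, of v r] by (simp add: inner_commute)
    have "?z \<bullet> (A *v ?z) = \<mu> + 2 * t * \<rho> + t^2 * c"
      unfolding \<mu>_def c_def \<rho>_def using vAr rAv
      by (simp add: matrix_vector_right_distrib matrix_vector_mult_scaleR inner_add_left inner_add_right
          algebra_simps power2_eq_square)
    moreover have "?z \<bullet> ?z = 1 + t^2 * \<rho>" unfolding \<rho>_def using vv rv
      by (simp add: inner_add_left inner_add_right inner_commute algebra_simps power2_eq_square)
    ultimately have "\<mu> + 2 * t * \<rho> + t^2 * c \<le> \<mu> * (1 + t^2 * \<rho>)" using hom[OF zB] by simp
    hence "2 * t * \<rho> \<le> t^2 * (\<mu> * \<rho> - c)" by (simp add: algebra_simps)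
    hence "2 * \<rho> \<le> t * (\<mu> * \<rho> - c)" using tpos by (simp add: power2_eq_square)
    also have "\<dots> \<le> t * (\<bar>\<mu>\<bar> * \<rho> + \<bar>c\<bar>)"
    proof -
      have "\<mu> * \<rho> \<le> \<bar>\<mu>\<bar> * \<rho>" using \<rho>pos by (intro mult_right_mono) auto
      hence "\<mu> * \<rho> - c \<le> \<bar>\<mu>\<bar> * \<rho> + \<bar>c\<bar>" by linarith
      then show ?thesis using tpos by (intro mult_left_mono) auto
    qed
    also have "\<dots> < \<rho>" using tden tpos by (simp add: algebra_simps)
    finally show False using \<rho>pos by simp
  qed
  then show ?thesis using nv vB unfolding r_def \<mu>_def by auto
qed


lemma oeig_card:
  fixes A :: "real^'n^'n"
  assumes "oeig A B" shows "card B \<le> CARD('n)"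
proof -
  have "pairwise orthogonal B" using assms unfolding oeig_def pairwise_def orthogonal_def by blast
  moreover have "0 \<notin> B" using assms unfolding oeig_def by force
  ultimately have "independent B" by (rule pairwise_orthogonal_independent)
  then have "card B \<le> DIM(real^'n)" by (rule independent_card_le)
  then show ?thesis by simp
qed

lemma orth_sum_coeff:
  fixes B :: "(real^'n) set"
  assumes "finite B" "\<forall>b\<in>B. norm b = 1" "\<forall>b\<in>B. \<forall>c\<in>B. b \<noteq> c \<longrightarrow> b \<bullet> c = 0" "c \<in> B"
  shows "c \<bullet> (\<Sum>b\<in>B. k b *\<^sub>R b) = k c"
proof -
  have "c \<bullet> (\<Sum>b\<in>B. k b *\<^sub>R b) = (\<Sum>b\<in>B. k b * (c \<bullet> b))" by (simp add: inner_sum_right)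
  also have "\<dots> = k c * (c \<bullet> c) + (\<Sum>b\<in>B - {c}. k b * (c \<bullet> b))"
    using assms by (simp add: sum.remove)
  also have "(\<Sum>b\<in>B - {c}. k b * (c \<bullet> b)) = 0" using assms by (intro sum.neutral) auto
  also have "c \<bullet> c = 1" using assms by (simp add: norm_eq_1)
  finally show ?thesis by simp
qed

lemma basis_exists:
  fixes A :: "real^'n^'n"
  assumes sym: "transpose A = A"
  shows "\<exists>B. oeig A B \<and> (\<forall>x. x = (\<Sum>b\<in>B. (b \<bullet> x) *\<^sub>R b))"
proof -
  have "oeig A {}" unfolding oeig_def by simp
  moreover have "\<forall>B. oeig A B \<longrightarrow> card B < CARD('n) + 1" using oeig_card by (metis less_Suc_eq_le Suc_eq_plus1)
  ultimately obtain B where oe: "oeig A B" and mx: "\<forall>C. oeig A C \<longrightarrow> card C \<le> card B"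
    using ex_has_greatest_nat[of "oeig A" "{}" card] by blast
  have fin: "finite B" and nb: "\<forall>b\<in>B. norm b = 1" and ob: "\<forall>b\<in>B. \<forall>c\<in>B. b \<noteq> c \<longrightarrow> b \<bullet> c = 0"
    and eb: "\<forall>b\<in>B. A *v b = (b \<bullet> (A *v b)) *\<^sub>R b" using oe unfolding oeig_def by auto
  have "x = (\<Sum>b\<in>B. (b \<bullet> x) *\<^sub>R b)" for x
  proof (rule ccontr)
    assume ne: "x \<noteq> (\<Sum>b\<in>B. (b \<bullet> x) *\<^sub>R b)"
    define y where "y = x - (\<Sum>b\<in>B. (b \<bullet> x) *\<^sub>R b)"
    have y0: "y \<noteq> 0" using ne unfolding y_def by simp
    have yB: "\<forall>c\<in>B. c \<bullet> y = 0"
      unfolding y_def using orth_sum_coeff[OF fin nb ob] by (simp add: inner_diff_right)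
    obtain v where nv: "norm v = 1" and vB: "\<forall>b\<in>B. b \<bullet> v = 0" and ev: "A *v v = (v \<bullet> (A *v v)) *\<^sub>R v"
      using eig_step[OF sym oe y0 yB] by blast
    have vnot: "v \<notin> B" using nv vB by (metis inner_eq_zero_iff norm_zero zero_neq_one)
    have "oeig A (insert v B)" unfolding oeig_def using fin nb ob eb nv vB ev
      by (auto simp: inner_commute)
    then have "card (insert v B) \<le> card B" using mx by blast
    then show False using vnot fin by simp
  qed
  then show ?thesis using oe by blast
qed

lemma sqrt_unique_form:
  fixes A T :: "real^'n^'n"
  assumes oe: "oeig A B" and span: "\<forall>x. x = (\<Sum>b\<in>B. (b \<bullet> x) *\<^sub>R b)"
    and T: "pos_semidef T" "T ** T = A"
  shows "T *v x = (\<Sum>b\<in>B. (sqrt (b \<bullet> (A *v b)) * (b \<bullet> x)) *\<^sub>R b)"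
proof -
  have Tsym: "transpose T = T" and Tpsd: "\<forall>x. x \<bullet> (T *v x) \<ge> 0" using T unfolding pos_semidef_def by auto
  have Teig: "T *v b = sqrt (b \<bullet> (A *v b)) *\<^sub>R b" if bB: "b \<in> B" for b
  proof -
    define \<mu> where "\<mu> = b \<bullet> (A *v b)"
    have Ab: "A *v b = \<mu> *\<^sub>R b" using oe bB unfolding oeig_def \<mu>_def by auto
    have TT: "T *v (T *v y) = A *v y" for y using T(2) by (simp add: matrix_vector_mul_assoc)
    have mu0: "\<mu> \<ge> 0"
    proof -
      have "\<mu> = (T *v b) \<bullet> (T *v b)" unfolding \<mu>_def using sym_dot[OF Tsym, of b "T *v b"] TT by simp
      then show ?thesis by simp
    qed
    define s where "s = sqrt \<mu>"
    have ss: "s * s = \<mu>" unfolding s_def using mu0 by simp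
    show ?thesis
    proof (cases "s = 0")
      case True
      then have "\<mu> = 0" using ss by simp
      then have "(T *v b) \<bullet> (T *v b) = 0" using sym_dot[OF Tsym, of b "T *v b"] TT Ab by simp
      then show ?thesis using True s_def \<mu>_def by simp
    next
      case False
      then have spos: "s > 0" unfolding s_def using mu0 by simp
      define z where "z = T *v b - s *\<^sub>R b"
      have "T *v z = - s *\<^sub>R z" unfolding z_def using TT Ab ss
        by (simp add: matrix_vector_mult_diff_distrib matrix_vector_mult_scaleR algebra_simps)
      then have "z \<bullet> (T *v z) = - s * (z \<bullet> z)" by simp
      moreover have "z \<bullet> (T *v z) \<ge> 0" using Tpsd by blast
      ultimately have "s * (z \<bullet> z) \<le> 0" by simp
      then have "z \<bullet> z \<le> 0" using spos by (simp add: mult_le_0_iff)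
      then have "z = 0" by (metis inner_eq_zero_iff inner_ge_zero order_antisym)
      then show ?thesis unfolding z_def s_def \<mu>_def by simp
    qed
  qed
  have "T *v x = T *v (\<Sum>b\<in>B. (b \<bullet> x) *\<^sub>R b)" using span by metis
  also have "\<dots> = (\<Sum>b\<in>B. (b \<bullet> x) *\<^sub>R (T *v b))" by (simp add: vec.sum matrix_vector_mult_scaleR)
  also have "\<dots> = (\<Sum>b\<in>B. (sqrt (b \<bullet> (A *v b)) * (b \<bullet> x)) *\<^sub>R b)"
    by (intro sum.cong refl) (simp add: Teig mult.commute)
  finally show ?thesis .
qed


lemma msqrt_props:
  fixes A :: "real^'n^'n"
  assumes psd: "pos_semidef A"
  shows "pos_semidef (msqrt A) \<and> msqrt A ** msqrt A = A"
proof -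
  have sym: "transpose A = A" and Apsd: "\<forall>x. x \<bullet> (A *v x) \<ge> 0" using psd unfolding pos_semidef_def by auto
  obtain B where oe: "oeig A B" and span: "\<forall>x. x = (\<Sum>b\<in>B. (b \<bullet> x) *\<^sub>R b)"
    using basis_exists[OF sym] by blast
  have fin: "finite B" and nb: "\<forall>b\<in>B. norm b = 1" and ob: "\<forall>b\<in>B. \<forall>c\<in>B. b \<noteq> c \<longrightarrow> b \<bullet> c = 0"
    and eb: "\<forall>b\<in>B. A *v b = (b \<bullet> (A *v b)) *\<^sub>R b" using oe unfolding oeig_def by auto
  define S :: "real^'n^'n" where "S = (\<chi> i j. \<Sum>b\<in>B. sqrt (b \<bullet> (A *v b)) * (b $ i * b $ j))"
  have Sv: "S *v x = (\<Sum>b\<in>B. (sqrt (b \<bullet> (A *v b)) * (b \<bullet> x)) *\<^sub>R b)" for x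
  proof -
    have "(S *v x) $ i = (\<Sum>b\<in>B. (sqrt (b \<bullet> (A *v b)) * (b \<bullet> x)) *\<^sub>R b) $ i" for i
    proof -
      have "(S *v x) $ i = (\<Sum>j\<in>UNIV. (\<Sum>b\<in>B. sqrt (b \<bullet> (A *v b)) * (b $ i * b $ j)) * x $ j)"
        unfolding S_def by (simp add: matrix_vector_mult_def)
      also have "\<dots> = (\<Sum>j\<in>UNIV. \<Sum>b\<in>B. sqrt (b \<bullet> (A *v b)) * (b $ i * b $ j) * x $ j)"
        by (simp add: sum_distrib_right)
      also have "\<dots> = (\<Sum>b\<in>B. \<Sum>j\<in>UNIV. sqrt (b \<bullet> (A *v b)) * (b $ i * b $ j) * x $ j)"
        by (rule sum.swap)
      also have "\<dots> = (\<Sum>b\<in>B. (sqrt (b \<bullet> (A *v b)) * (\<Sum>j\<in>UNIV. b $ j * x $ j)) * b $ i)"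
        by (intro sum.cong refl) (simp add: sum_distrib_left sum_distrib_right algebra_simps)
      also have "\<dots> = (\<Sum>b\<in>B. (sqrt (b \<bullet> (A *v b)) * (b \<bullet> x)) *\<^sub>R b) $ i"
        by (simp add: inner_vec_def)
      finally show ?thesis .
    qed
    then show ?thesis by (simp add: vec_eq_iff)
  qed
  have mu0: "b \<bullet> (A *v b) \<ge> 0" for b using Apsd by blast
  have Ssym: "transpose S = S" unfolding S_def transpose_def by (simp add: vec_eq_iff mult.commute)
  have Spsd: "x \<bullet> (S *v x) \<ge> 0" for x
  proof -
    have "x \<bullet> (S *v x) = (\<Sum>b\<in>B. sqrt (b \<bullet> (A *v b)) * (b \<bullet> x)^2)"
      unfolding Sv[of x] inner_sum_right inner_scaleR_right
    proof (intro sum.cong refl)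
      fix b show "sqrt (b \<bullet> (A *v b)) * (b \<bullet> x) * (x \<bullet> b) = sqrt (b \<bullet> (A *v b)) * (b \<bullet> x)^2"
        by (simp add: inner_commute power2_eq_square)
    qed
    also have "\<dots> \<ge> 0" by (intro sum_nonneg mult_nonneg_nonneg) (simp_all add: mu0)
    finally show ?thesis .
  qed
  have SS: "S ** S = A"
  proof -
    have "(S ** S) *v x = A *v x" for x
    proof -
      have "(S ** S) *v x = S *v (S *v x)" by (simp add: matrix_vector_mul_assoc)
      also have "\<dots> = (\<Sum>b\<in>B. (sqrt (b \<bullet> (A *v b)) * (b \<bullet> (S *v x))) *\<^sub>R b)" by (rule Sv)
      also have "\<dots> = (\<Sum>b\<in>B. (b \<bullet> x) *\<^sub>R (A *v b))"
      proof (intro sum.cong refl)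
        fix b assume bB: "b \<in> B"
        have "b \<bullet> (S *v x) = sqrt (b \<bullet> (A *v b)) * (b \<bullet> x)"
          unfolding Sv by (rule orth_sum_coeff[OF fin nb ob bB])
        then show "(sqrt (b \<bullet> (A *v b)) * (b \<bullet> (S *v x))) *\<^sub>R b = (b \<bullet> x) *\<^sub>R (A *v b)"
        proof -
          have "sqrt (b \<bullet> (A *v b)) * (sqrt (b \<bullet> (A *v b)) * (b \<bullet> x)) = (b \<bullet> (A *v b)) * (b \<bullet> x)"
            using mu0[of b] by (simp add: mult.assoc[symmetric])
          moreover have "(b \<bullet> x) *\<^sub>R (A *v b) = ((b \<bullet> (A *v b)) * (b \<bullet> x)) *\<^sub>R b"
            using eb bB by (metis scaleR_scaleR mult.commute)
          ultimately show ?thesis using \<open>b \<bullet> (S *v x) = _\<close> by simp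
        qed
      qed
      also have "\<dots> = A *v (\<Sum>b\<in>B. (b \<bullet> x) *\<^sub>R b)" by (simp add: vec.sum matrix_vector_mult_scaleR)
      also have "\<dots> = A *v x" using span by metis
      finally show ?thesis .
    qed
    then show ?thesis by (simp add: matrix_eq)
  qed
  have Sok: "pos_semidef S \<and> S ** S = A" unfolding pos_semidef_def using Ssym Spsd SS by auto
  have "msqrt A = S" unfolding msqrt_def
  proof (rule the_equality)
    show "pos_semidef S \<and> S ** S = A" by (rule Sok)
    fix T assume T: "pos_semidef T \<and> T ** T = A"
    have "T *v x = S *v x" for x using sqrt_unique_form[OF oe span, of T x] T Sv by simp
    then show "T = S" by (simp add: matrix_eq)
  qed
  then show ?thesis using Sok by simp
qed


lemma dot_transpose:
  fixes M :: "real^'n^'m"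
  shows "x \<bullet> (M *v y) = (transpose M *v x) \<bullet> y"
  by (simp add: dot_lmul_matrix transpose_matrix_vector)

lemma inv_props:
  fixes A :: "real^'n^'n"
  assumes "invertible A"
  shows "A ** matrix_inv A = mat 1 \<and> matrix_inv A ** A = mat 1"
  using assms unfolding invertible_def matrix_inv_def by (rule someI_ex)

lemma inv_vec:
  fixes A :: "real^'n^'n"
  assumes "invertible A"
  shows "A *v (matrix_inv A *v x) = x" "matrix_inv A *v (A *v x) = x"
  using inv_props[OF assms] by (simp_all add: matrix_vector_mul_assoc)

lemma inv_unique:
  fixes A X :: "real^'n^'n"
  assumes "invertible A" "X ** A = mat 1"
  shows "matrix_inv A = X"
proof -
  have "X = X ** (A ** matrix_inv A)" using inv_props[OF assms(1)] by simp
  also have "\<dots> = matrix_inv A" using assms(2) by (simp add: matrix_mul_assoc)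
  finally show ?thesis by simp
qed

lemma right_inv_invertible:
  fixes A X :: "real^'n^'n"
  assumes "A ** X = mat 1" shows "invertible A"
  unfolding invertible_def using assms matrix_left_right_inverse[of A X] by auto

lemma inv_sym:
  fixes A :: "real^'n^'n"
  assumes "invertible A" "transpose A = A"
  shows "transpose (matrix_inv A) = matrix_inv A"
proof -
  have "transpose (matrix_inv A) ** A = mat 1"
  proof -
    have "transpose (matrix_inv A) ** A = transpose (matrix_inv A) ** transpose A" using assms(2) by simp
    also have "\<dots> = transpose (A ** matrix_inv A)" by (simp add: matrix_transpose_mul)
    also have "\<dots> = mat 1" using inv_props[OF assms(1)] by (simp add: transpose_mat)
    finally show ?thesis .
  qed
  from inv_unique[OF assms(1) this] show ?thesis by (rule sym)
qed

lemma pd_invertible: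
  fixes A :: "real^'n^'n"
  assumes "pos_def A" shows "invertible A"
proof -
  have "inj ((*v) A)"
  proof (rule injI)
    fix x y assume "A *v x = A *v y"
    then have "A *v (x - y) = 0" by (simp add: matrix_vector_mult_diff_distrib)
    then have "(x - y) \<bullet> (A *v (x - y)) = 0" by simp
    moreover have "x - y \<noteq> 0 \<Longrightarrow> (x - y) \<bullet> (A *v (x - y)) > 0" using assms unfolding pos_def_def by blast
    ultimately show "x = y" by force
  qed
  then obtain B where "B ** A = mat 1" using matrix_left_invertible_injective by blast
  then show ?thesis unfolding invertible_def using matrix_left_right_inverse[of A B] by auto
qed

lemma transpose_bound:
  fixes M :: "real^'n^'m"
  shows "norm (transpose M *v y) \<le> onorm ((*v) M) * norm y"
proof -
  define z where "z = transpose M *v y"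
  have bl: "bounded_linear ((*v) M)" by (rule matrix_vector_mul_bounded_linear)
  have "(norm z)^2 = z \<bullet> z" by (simp add: power2_norm_eq_inner)
  also have "z \<bullet> z = y \<bullet> (M *v z)" unfolding z_def by (rule dot_transpose[symmetric])
  also have "\<dots> \<le> norm y * norm (M *v z)" by (rule norm_cauchy_schwarz)
  also have "\<dots> \<le> norm y * (onorm ((*v) M) * norm z)"
    by (intro mult_left_mono onorm[OF bl]) simp
  finally have *: "norm z * norm z \<le> (norm y * onorm ((*v) M)) * norm z"
    by (simp add: power2_eq_square algebra_simps)
  show ?thesis
  proof (cases "norm z = 0")
    case True then show ?thesis unfolding z_def using onorm_pos_le[OF bl] by simp
  next
    case False then have "norm z > 0" by simp
    with * have "norm z \<le> norm y * onorm ((*v) M)" by (simp add: mult_le_cancel_right)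
    then show ?thesis unfolding z_def by (simp add: mult.commute)
  qed
qed

lemma sq_form:
  fixes S :: "real^'n^'n"
  assumes "transpose S = S"
  shows "x \<bullet> (S *v (S *v x)) = (S *v x) \<bullet> (S *v x)"
  using sym_dot[OF assms, of x "S *v x"] .



theorem lemma5:
  fixes g :: "real^'d \<Rightarrow> real^'m"
    and Dg :: "real^'d \<Rightarrow> real^'d^'m"
    and Hg :: "'m \<Rightarrow> real^'d \<Rightarrow> real^'d^'d"
    and w_star w phi_star phi :: "real^'d"
    and lam_star lam :: "real^'m"
    and H :: "real^'d^'d" and W :: "real^'m^'m" and P_G :: "real^'d^'d"
    and L :: real
  assumes m_le_d: "CARD('m) \<le> CARD('d)"
    and strongly_convex: "\<And>i. strongly_convex (\<lambda>x. g x $ i)"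
    and jacobian: "\<And>x. (g has_derivative (\<lambda>h. Dg x *v h)) (at x)"
    and hessian: "\<And>i x. ((\<lambda>y. Dg y $ i) has_derivative (\<lambda>h. Hg i x *v h)) (at x)"
    and phi_star_max: "g phi_star \<le> 0" "\<And>x. g x \<le> 0 \<Longrightarrow> x \<bullet> w_star \<le> phi_star \<bullet> w_star"
    and phi_max: "g phi \<le> 0" "\<And>x. g x \<le> 0 \<Longrightarrow> x \<bullet> w \<le> phi \<bullet> w"
    and active: "g phi_star = 0" "g phi = 0"
    and lam_nonneg: "lam_star \<ge> 0" "lam \<ge> 0"
    and kkt_star: "w_star = transpose (Dg phi_star) *v lam_star"
    and kkt: "w = transpose (Dg phi) *v lam"
    and H_def: "H = (\<Sum>i\<in>UNIV. lam_star $ i *\<^sub>R Hg i phi_star)"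
    and H_pd: "pos_def H"
    and W_def: "W = Dg phi_star ** matrix_inv H ** transpose (Dg phi_star)"
    and W_inv: "invertible W"
    and P_G_def: "P_G = matrix_inv (msqrt H) ** transpose (Dg phi_star) ** matrix_inv W
                        ** Dg phi_star ** matrix_inv (msqrt H)"
    and S1: "mnorm (matrix_inv H)
               (transpose (Dg phi - Dg phi_star) *v lam_star - H *v (phi - phi_star))
             \<le> 1/4 * mnorm H (phi - phi_star)"
    and L_pos: "L > 0"
    and S2: "\<And>x. onorm (\<lambda>v. (matrix_inv (msqrt W) ** (Dg x - Dg phi_star) ** matrix_inv (msqrt H)) *v v)
                  \<le> L * mnorm H (x - phi_star)"
  shows "(\<exists>\<Delta>. w - w_star = H *v (phi - phi_star) + transpose (Dg phi_star) *v (lam - lam_star) + \<Delta>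
              \<and> mnorm (matrix_inv H) \<Delta>
                  \<le> 1/4 * mnorm H (phi - phi_star) + L * mnorm H (phi - phi_star) * mnorm W (lam - lam_star))
         \<and> norm (P_G *v (msqrt H *v (phi - phi_star))) \<le> L / 2 * (mnorm H (phi - phi_star))\<^sup>2"
proof -
  define R where "R = msqrt H"
  define Ri where "Ri = matrix_inv R"
  define Q where "Q = msqrt W"
  define Qi where "Qi = matrix_inv Q"
  define Hi where "Hi = matrix_inv H"
  define G where "G = Dg phi_star"
  define \<delta> where "\<delta> = phi - phi_star"
  have Hsym: "transpose H = H" using H_pd unfolding pos_def_def by simp
  have Hpsd: "pos_semidef H" using H_pd unfolding pos_def_def pos_semidef_def
    by (metis inner_zero_left matrix_vector_mult_0_right order_le_less order_refl)
  have Hinv: "invertible H" by (rule pd_invertible[OF H_pd])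
  have Rp: "pos_semidef R" "R ** R = H" using msqrt_props[OF Hpsd] unfolding R_def by auto
  have Rsym: "transpose R = R" using Rp unfolding pos_semidef_def by simp
  have Rinv: "invertible R"
    using inv_props[OF Hinv] Rp(2) right_inv_invertible[of R "R ** matrix_inv H"]
    by (simp add: matrix_mul_assoc)
  have Risym: "transpose Ri = Ri" unfolding Ri_def by (rule inv_sym[OF Rinv Rsym])
  have Hi_eq: "Hi = Ri ** Ri" unfolding Hi_def
  proof (rule inv_unique[OF Hinv])
    show "Ri ** Ri ** H = mat 1" unfolding Rp(2)[symmetric] Ri_def using inv_props[OF Rinv]
      by (metis matrix_mul_assoc matrix_mul_lid)
  qed
  have Hiv: "Hi *v x = Ri *v (Ri *v x)" for x by (simp add: Hi_eq matrix_vector_mul_assoc)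
  have Wv: "W *v x = G *v (Hi *v (transpose G *v x))" for x
    unfolding W_def G_def Hi_def by (simp only: matrix_vector_mul_assoc matrix_mul_assoc)
  have Wsym: "transpose W = W" unfolding W_def
    using inv_sym[OF Hinv Hsym] by (simp add: matrix_transpose_mul matrix_mul_assoc)
  have Wpsd: "pos_semidef W" unfolding pos_semidef_def
  proof (intro conjI allI Wsym)
    fix x
    have "x \<bullet> (W *v x) = (transpose G *v x) \<bullet> (Ri *v (Ri *v (transpose G *v x)))"
      unfolding Wv dot_transpose[of x G] Hiv ..
    also have "\<dots> = (Ri *v (transpose G *v x)) \<bullet> (Ri *v (transpose G *v x))"
      by (rule sq_form[OF Risym])
    finally show "x \<bullet> (W *v x) \<ge> 0" by simp
  qed
  have Qp: "pos_semidef Q" "Q ** Q = W" using msqrt_props[OF Wpsd] unfolding Q_def by auto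
  have Qsym: "transpose Q = Q" using Qp unfolding pos_semidef_def by simp
  have Qinv: "invertible Q"
    using inv_props[OF W_inv] Qp(2) right_inv_invertible[of Q "Q ** matrix_inv W"]
    by (simp add: matrix_mul_assoc)
  have Qisym: "transpose Qi = Qi" unfolding Qi_def by (rule inv_sym[OF Qinv Qsym])
  have Wi_eq: "matrix_inv W = Qi ** Qi"
  proof (rule inv_unique[OF W_inv])
    show "Qi ** Qi ** W = mat 1" unfolding Qp(2)[symmetric] Qi_def using inv_props[OF Qinv]
      by (metis matrix_mul_assoc matrix_mul_lid)
  qed
  have mH: "mnorm H x = norm (R *v x)" for x
  proof -
    have "x \<bullet> (H *v x) = (R *v x) \<bullet> (R *v x)"
      unfolding Rp(2)[symmetric] matrix_vector_mul_assoc[symmetric] by (rule sq_form[OF Rsym])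
    then show ?thesis unfolding mnorm_def by (simp add: norm_eq_sqrt_inner)
  qed
  have mHi: "mnorm (matrix_inv H) x = norm (Ri *v x)" for x
  proof -
    have "x \<bullet> (Hi *v x) = (Ri *v x) \<bullet> (Ri *v x)"
      unfolding Hiv by (rule sq_form[OF Risym])
    then show ?thesis unfolding mnorm_def Hi_def by (simp add: norm_eq_sqrt_inner)
  qed
  have mW: "mnorm W x = norm (Q *v x)" for x
  proof -
    have "x \<bullet> (W *v x) = (Q *v x) \<bullet> (Q *v x)"
      unfolding Qp(2)[symmetric] matrix_vector_mul_assoc[symmetric] by (rule sq_form[OF Qsym])
    then show ?thesis unfolding mnorm_def by (simp add: norm_eq_sqrt_inner)
  qed
  have S2': "norm (Qi *v ((Dg x - G) *v v)) \<le> L * mnorm H (x - phi_star) * mnorm H v" for x v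
  proof -
    let ?M = "Qi ** (Dg x - G) ** Ri"
    have "Qi *v ((Dg x - G) *v v) = ?M *v (R *v v)"
      by (simp add: matrix_vector_mul_assoc[symmetric] Ri_def inv_vec[OF Rinv])
    also have "norm \<dots> \<le> onorm ((*v) ?M) * norm (R *v v)"
      by (rule onorm[OF matrix_vector_mul_bounded_linear])
    also have "\<dots> \<le> L * mnorm H (x - phi_star) * norm (R *v v)"
      using S2[of x] by (intro mult_right_mono) (simp_all add: Qi_def Ri_def R_def Q_def G_def)
    also have "\<dots> = L * mnorm H (x - phi_star) * mnorm H v" by (simp add: mH)
    finally show ?thesis .
  qed
  have part1: "\<exists>\<Delta>. w - w_star = H *v (phi - phi_star) + transpose (Dg phi_star) *v (lam - lam_star) + \<Delta>
              \<and> mnorm (matrix_inv H) \<Delta>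
                  \<le> 1/4 * mnorm H (phi - phi_star) + L * mnorm H (phi - phi_star) * mnorm W (lam - lam_star)"
  proof -
    define E where "E = Dg phi - G"
    define \<Delta>1 where "\<Delta>1 = transpose E *v lam_star - H *v \<delta>"
    define \<Delta>2 where "\<Delta>2 = transpose E *v (lam - lam_star)"
    have eq: "w - w_star = H *v \<delta> + transpose G *v (lam - lam_star) + (\<Delta>1 + \<Delta>2)"
      unfolding kkt kkt_star \<Delta>1_def \<Delta>2_def E_def G_def
      by (simp add: transpose_matrix_vector vector_matrix_mult_diff_rdistrib vector_matrix_mult_diff_distrib algebra_simps)
    have b1: "norm (Ri *v \<Delta>1) \<le> 1/4 * mnorm H \<delta>"
      using S1 unfolding mHi \<Delta>1_def E_def G_def \<delta>_def by simp
    have "Ri *v \<Delta>2 = transpose (Qi ** E ** Ri) *v (Q *v (lam - lam_star))"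
    proof -
      have tM: "transpose (Qi ** E ** Ri) = Ri ** (transpose E ** Qi)"
        by (simp only: matrix_transpose_mul Risym Qisym transpose_transpose)
      have "transpose (Qi ** E ** Ri) *v (Q *v (lam - lam_star)) = Ri *v (transpose E *v (Qi *v (Q *v (lam - lam_star))))"
        unfolding tM by (simp only: matrix_vector_mul_assoc matrix_mul_assoc)
      also have "Qi *v (Q *v (lam - lam_star)) = lam - lam_star" unfolding Qi_def by (rule inv_vec(2)[OF Qinv])
      finally show ?thesis unfolding \<Delta>2_def by simp
    qed
    also have "norm \<dots> \<le> onorm ((*v) (Qi ** E ** Ri)) * norm (Q *v (lam - lam_star))"
      by (rule transpose_bound)
    also have "\<dots> \<le> L * mnorm H \<delta> * mnorm W (lam - lam_star)"
      using S2[of phi] unfolding Qi_def Ri_def R_def Q_def E_def G_def mW \<delta>_def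
      by (intro mult_right_mono) auto
    finally have b2: "norm (Ri *v \<Delta>2) \<le> L * mnorm H \<delta> * mnorm W (lam - lam_star)" .
    have "mnorm (matrix_inv H) (\<Delta>1 + \<Delta>2) \<le> norm (Ri *v \<Delta>1) + norm (Ri *v \<Delta>2)"
      unfolding mHi by (simp add: matrix_vector_right_distrib norm_triangle_ineq)
    with b1 b2 eq show ?thesis unfolding \<delta>_def G_def by (intro exI[of _ "\<Delta>1 + \<Delta>2"]) auto
  qed
  have part2: "norm (P_G *v (msqrt H *v (phi - phi_star))) \<le> L / 2 * (mnorm H (phi - phi_star))\<^sup>2"
  proof -
    define y where "y = Qi *v (G *v \<delta>)"
    define N where "N = mnorm H \<delta>"
    have N0: "N \<ge> 0" unfolding N_def mH by simp
    have PG: "P_G = Ri ** transpose G ** (Qi ** Qi) ** G ** Ri"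
      using P_G_def Wi_eq by (simp add: Ri_def R_def G_def)
    have "P_G *v (R *v \<delta>) = Ri *v (transpose G *v (Qi *v (Qi *v (G *v (Ri *v (R *v \<delta>))))))"
      unfolding PG by (simp only: matrix_vector_mul_assoc matrix_mul_assoc)
    also have "Ri *v (R *v \<delta>) = \<delta>" unfolding Ri_def by (rule inv_vec(2)[OF Rinv])
    finally have PGv: "P_G *v (R *v \<delta>) = Ri *v (transpose G *v (Qi *v y))" unfolding y_def .
    have normeq: "norm (Ri *v (transpose G *v (Qi *v y))) = norm y"
    proof -
      define v where "v = transpose G *v (Qi *v y)"
      have "(Ri *v v) \<bullet> (Ri *v v) = v \<bullet> (Ri *v (Ri *v v))" by (rule sq_form[OF Risym, symmetric])
      also have "\<dots> = v \<bullet> (Hi *v v)" by (simp only: Hiv)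
      also have "\<dots> = (Qi *v y) \<bullet> (G *v (Hi *v v))" unfolding v_def by (rule dot_transpose[symmetric])
      also have "\<dots> = (Qi *v y) \<bullet> (W *v (Qi *v y))" unfolding v_def Wv ..
      also have "\<dots> = (Qi *v y) \<bullet> (Q *v (Q *v (Qi *v y)))"
        unfolding Qp(2)[symmetric] by (simp only: matrix_vector_mul_assoc matrix_mul_assoc)
      also have "Q *v (Qi *v y) = y" unfolding Qi_def by (rule inv_vec(1)[OF Qinv])
      also have "(Qi *v y) \<bullet> (Q *v y) = y \<bullet> (Qi *v (Q *v y))" by (rule sym_dot[OF Qisym, symmetric])
      also have "Qi *v (Q *v y) = y" unfolding Qi_def by (rule inv_vec(2)[OF Qinv])
      finally have "(Ri *v v) \<bullet> (Ri *v v) = y \<bullet> y" .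
      then show ?thesis unfolding v_def by (simp add: norm_eq_sqrt_inner)
    qed
    have ybound: "norm y \<le> L / 2 * N^2"
    proof (cases "y = 0")
      case True then show ?thesis using L_pos by simp
    next
      case False
      define u where "u = - (y /\<^sub>R norm y)"
      have nu: "norm u = 1" unfolding u_def using False by simp
      have uy: "u \<bullet> y = - norm y" unfolding u_def using False
        by (simp add: power2_norm_eq_inner[symmetric] power2_eq_square)
      define s where "s = (\<lambda>t. u \<bullet> (Qi *v g (phi_star + t *\<^sub>R \<delta>)) - t * (u \<bullet> y) - L / 2 * t^2 * N^2)"
      have bl: "bounded_linear (\<lambda>v. u \<bullet> (Qi *v v))"
        by (rule bounded_linear_compose[OF bounded_linear_inner_right matrix_vector_mul_bounded_linear])
      have ds: "(s has_real_derivative (u \<bullet> (Qi *v (Dg (phi_star + t *\<^sub>R \<delta>) *v \<delta>)) - u \<bullet> y - L * t * N^2)) (at t)" for t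
      proof -
        have d1: "((\<lambda>t. phi_star + t *\<^sub>R \<delta>) has_derivative (\<lambda>h. h *\<^sub>R \<delta>)) (at t)"
          by (auto intro!: derivative_eq_intros)
        have d2: "(g has_derivative (\<lambda>h. Dg (phi_star + t *\<^sub>R \<delta>) *v h)) (at (phi_star + t *\<^sub>R \<delta>))"
          by (rule jacobian)
        have d3: "((\<lambda>t. g (phi_star + t *\<^sub>R \<delta>)) has_derivative (\<lambda>h. Dg (phi_star + t *\<^sub>R \<delta>) *v (h *\<^sub>R \<delta>))) (at t)"
          using diff_chain_at[OF d1 d2] by (simp add: o_def)
        have d4: "((\<lambda>t. u \<bullet> (Qi *v g (phi_star + t *\<^sub>R \<delta>))) has_derivative
                   (\<lambda>h. u \<bullet> (Qi *v (Dg (phi_star + t *\<^sub>R \<delta>) *v (h *\<^sub>R \<delta>))))) (at t)"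
          by (rule bounded_linear.has_derivative[OF bl d3])
        have eqf: "(\<lambda>h. u \<bullet> (Qi *v (Dg (phi_star + t *\<^sub>R \<delta>) *v (h *\<^sub>R \<delta>))))
                   = (*) (u \<bullet> (Qi *v (Dg (phi_star + t *\<^sub>R \<delta>) *v \<delta>)))"
          by (rule ext) (simp add: matrix_vector_mult_scaleR mult.commute)
        have d5: "((\<lambda>t. u \<bullet> (Qi *v g (phi_star + t *\<^sub>R \<delta>))) has_real_derivative
                   (u \<bullet> (Qi *v (Dg (phi_star + t *\<^sub>R \<delta>) *v \<delta>)))) (at t)"
          unfolding has_field_derivative_def using d4 eqf by simp
        have d6: "((\<lambda>t. t * (u \<bullet> y)) has_real_derivative (u \<bullet> y)) (at t)"
          by (auto intro!: derivative_eq_intros)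
        have d7: "((\<lambda>t. L / 2 * t^2 * N^2) has_real_derivative (L * t * N^2)) (at t)"
          by (auto intro!: derivative_eq_intros)
        show ?thesis unfolding s_def by (intro DERIV_diff d5 d6 d7)
      qed
      have dneg: "u \<bullet> (Qi *v (Dg (phi_star + t *\<^sub>R \<delta>) *v \<delta>)) - u \<bullet> y - L * t * N^2 \<le> 0"
        if t01: "0 \<le> t" "t \<le> 1" for t
      proof -
        let ?x = "phi_star + t *\<^sub>R \<delta>"
        have "u \<bullet> (Qi *v (Dg ?x *v \<delta>)) - u \<bullet> y = u \<bullet> (Qi *v ((Dg ?x - G) *v \<delta>))"
          unfolding y_def by (simp add: matrix_vector_mult_diff_rdistrib matrix_vector_mult_diff_distrib inner_diff_right)
        also have "\<dots> \<le> norm u * norm (Qi *v ((Dg ?x - G) *v \<delta>))" by (rule norm_cauchy_schwarz)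
        also have "\<dots> \<le> L * mnorm H (?x - phi_star) * mnorm H \<delta>" using nu S2'[of ?x \<delta>] by simp
        also have "mnorm H (?x - phi_star) = t * N" unfolding N_def mH using t01
          by (simp add: matrix_vector_mult_scaleR)
        finally show ?thesis unfolding N_def by (simp add: power2_eq_square algebra_simps)
      qed
      have "s 1 \<le> s 0"
      proof (rule DERIV_nonpos_imp_nonincreasing[of 0 1 s])
        show "(0::real) \<le> 1" by simp
      next
        fix x :: real assume x01: "0 \<le> x" "x \<le> 1"
        show "\<exists>y. (s has_real_derivative y) (at x) \<and> y \<le> 0"
          using ds[of x] dneg[OF x01] by blast
      qed
      moreover have "s 0 = 0" unfolding s_def using active(1) by simp
      moreover have "s 1 = norm y - L / 2 * N^2" unfolding s_def using active(2) uy
        by (simp add: \<delta>_def)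
      ultimately show ?thesis by simp
    qed
    show ?thesis using PGv normeq ybound unfolding R_def N_def \<delta>_def by simp
  qed
  show ?thesis using part1 part2 by blast
qed

end
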